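(* Fix $n\in\mathbb N$, a noise level $\varepsilon\in[0,1)$ and a target risk level $\bar q\in[0,1]$. Let $G$ be the complete graph on $n$ vertices. Under the Water-Filling Strategy $\psi^{wf}_{\bar q}$, the goal-hitting time $T^{wf}$ and intentional goal-hitting time $T^{wf}_{IH}$ satisfy $$\mathbb E(T^{wf})\le\mathbb E(T^{wf}_{IH})\le\frac1{2\bar q}+\frac12+\frac{\bar q\varepsilon}{2(1-\varepsilon)^2}.$$
   Context: Model: neighborhoods $\mathcal N(v)$; in the complete graph on $n$ vertices every vertex is adjacent to every vertex including itself, so $|\mathcal N(v)|=n$. Goal $D$ uniform on vertices; fixed initial vertex; horizon $K$; $B_1,\dots,B_K$ i.i.d. Bernoulli$(1-\varepsilon)$ independent of all else. The agent in state $X_t$ chooses $a_t\in\mathcal N(X_t)$; if $B_t=1$, $X_{t+1}=a_t$, else $X_{t+1}$ uniform on $\mathcal N(X_t)$. $T=\inf\{t\ge1:X_t=D\}$; if not reached by $K$, set $X_{K+1}=D$, $B_K=1$. Random-Step: $a_t$ uniform on $\mathcal N(X_t)$; Goal-Attempt: $a_t=D$ (only if $D\in\mathcal N(X_t)$). $T_{IH}=\inf\{t\ge1:$ Goal-Attempt at $t-1$ and $B_{t-1}=1\}$ ($\le K+1$). $L(t)=\sum_{s\le t}\mathbb I(X_s\in\mathcal N(D))$. Water-Filling Strategy $\psi^{wf}_{\bar q}$: $t^*=\lceil1/\bar q-\varepsilon/(1-\varepsilon)\rceil$ (standing assumption: $1/\bar q-\varepsilon/(1-\varepsilon)$ is an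 integer), $p_t=\frac{\bar q}{1-\varepsilon}(1-t\bar q)^{-1}$ for $0\le t<t^*-1$, $p_t=1$ otherwise; at time $t$, if $X_t\in\mathcal N(D)$ and $T_{IH}>t$, Goal-Attempt with probability $p_{L(t)}$, else Random-Step; otherwise Random-Step. *)

theory Defs
  imports "HOL-Probability.Probability"
begin

text \<open>Vertices are 0..<n. A graph is given by its neighbourhood map N.
  The complete graph (every vertex adjacent to every vertex, including itself).\<close>
definition complete_nbhd :: "nat \<Rightarrow> nat \<Rightarrow> nat set" where
  "complete_nbhd n v = {..<n}"

definition wf_tstar :: "real \<Rightarrow> real \<Rightarrow> int" where
  "wf_tstar q eps = \<lceil>1 / q - eps / (1 - eps)\<rceil>"

definition wf_p :: "real \<Rightarrow> real \<Rightarrow> nat \<Rightarrow> real" where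
  "wf_p q eps t = (if int t < wf_tstar q eps - 1
                   then q / (1 - eps) * inverse (1 - real t * q) else 1)"

text \<open>State at time t: (X_t, L(t), first hitting time found so far, first intentional
  hitting time found so far).\<close>
type_synonym wf_state = "nat \<times> nat \<times> nat option \<times> nat option"

definition wf_step ::
  "(nat \<Rightarrow> nat set) \<Rightarrow> real \<Rightarrow> real \<Rightarrow> nat \<Rightarrow> nat \<Rightarrow> wf_state \<Rightarrow> wf_state pmf" where
  "wf_step N q eps d t s =
     (case s of (x, L, Th, Tih) \<Rightarrow>
       bind_pmf (if x \<in> N d \<and> Tih = None then bernoulli_pmf (wf_p q eps L) else return_pmf False)
         (\<lambda>attempt.
       bind_pmf (if attempt then return_pmf d else pmf_of_set (N x))
         (\<lambda>a.
       bind_pmf (bernoulli_pmf (1 - eps))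
         (\<lambda>b.
       bind_pmf (if b then return_pmf a else pmf_of_set (N x))
         (\<lambda>x'.
       return_pmf (x',
                   L + (if x' \<in> N d then 1 else 0),
                   (if Th = None \<and> x' = d then Some (Suc t) else Th),
                   (if Tih = None \<and> attempt \<and> b then Some (Suc t) else Tih)))))))"

primrec wf_run ::
  "(nat \<Rightarrow> nat set) \<Rightarrow> real \<Rightarrow> real \<Rightarrow> nat \<Rightarrow> nat \<Rightarrow> nat \<Rightarrow> wf_state \<Rightarrow> wf_state pmf" where
  "wf_run N q eps d 0 t s = return_pmf s"
| "wf_run N q eps d (Suc k) t s = bind_pmf (wf_step N q eps d t s) (\<lambda>s'. wf_run N q eps d k (Suc t) s')"

text \<open>Joint law of (T, T_IH): goal D uniform on the n vertices, initial vertex x0 at time 0,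
  horizon K (transitions at times 0..K-1; if not reached by K, the time is set to K+1).\<close>
definition wf_times ::
  "(nat \<Rightarrow> nat set) \<Rightarrow> nat \<Rightarrow> real \<Rightarrow> real \<Rightarrow> nat \<Rightarrow> nat \<Rightarrow> (nat \<times> nat) pmf" where
  "wf_times N n q eps x0 K =
     bind_pmf (pmf_of_set {..<n}) (\<lambda>d.
     map_pmf (\<lambda>(x, L, Th, Tih).
                (case Th of Some t \<Rightarrow> t | None \<Rightarrow> Suc K,
                 case Tih of Some t \<Rightarrow> t | None \<Rightarrow> Suc K))
             (wf_run N q eps d K 0 (x0, 0, None, None)))"

end

theory Submission
  imports Defs
begin


primrec sr :: "real \<Rightarrow> real \<Rightarrow> nat \<Rightarrow> nat \<Rightarrow> nat option \<Rightarrow> nat option pmf" where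
  "sr q eps 0 t ob = return_pmf ob"
| "sr q eps (Suc k) t ob = bind_pmf (if ob = None then bernoulli_pmf (wf_p q eps t) else return_pmf False)
     (\<lambda>a. bind_pmf (bernoulli_pmf (1-eps)) (\<lambda>b. sr q eps k (Suc t) (if ob = None \<and> a \<and> b then Some (Suc t) else ob)))"

lemma exp_return: "measure_pmf.expectation (return_pmf x) (f :: _ \<Rightarrow> real) = f x"
  by (simp add: return_pmf.rep_eq integral_return)

lemma fin_bool: "finite (set_pmf (p :: bool pmf))"
  by (rule finite_subset[OF subset_UNIV]) simp

lemma sr_Some: "sr q eps k t (Some b) = return_pmf (Some b)"
  by (induction k arbitrary: t) (simp_all add: bind_return_pmf)

lemma sr_finite: "finite (set_pmf (sr q eps k t ob))"
  by (induction k arbitrary: t ob) (auto simp: fin_bool)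

lemma exp_bern:
  assumes "0 \<le> p" "p \<le> 1" "\<And>a. finite (set_pmf (f a))"
  shows "measure_pmf.expectation (bind_pmf (bernoulli_pmf p) f) (h :: _ \<Rightarrow> real)
      = p * measure_pmf.expectation (f True) h + (1 - p) * measure_pmf.expectation (f False) h"
  using assms by (subst pmf_expectation_bind[of UNIV]) (auto simp: UNIV_bool)


definition Mn :: "real \<Rightarrow> real \<Rightarrow> nat" where "Mn q eps = nat (wf_tstar q eps - 1)"
definition ee :: "real \<Rightarrow> real" where "ee eps = eps / (1 - eps)"
definition AA :: "real \<Rightarrow> real \<Rightarrow> nat \<Rightarrow> real" where
  "AA q eps t = (real (Mn q eps) - real t) - q * (real (Mn q eps) * (real (Mn q eps) - 1) - real t * (real t - 1)) / 2
     + (1 - real (Mn q eps) * q) * (1 + ee eps)"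
definition VV :: "real \<Rightarrow> real \<Rightarrow> nat \<Rightarrow> real" where
  "VV q eps t = (if t < Mn q eps then AA q eps t / (1 - real t * q) else 1 + ee eps)"

context
  fixes q eps :: real
  assumes e0: "0 \<le> eps" and e1: "eps < 1" and q0: "0 < q" and q1: "q \<le> 1"
    and zint: "1 / q - eps / (1 - eps) \<in> \<int>"
begin

lemma zi: obtains zi :: int where "1 / q - ee eps = real_of_int zi" "wf_tstar q eps = zi"
proof -
  from zint obtain zi where "1 / q - eps / (1 - eps) = real_of_int zi" by (auto elim: Ints_cases)
  then show ?thesis using that unfolding wf_tstar_def ee_def by simp
qed

lemma M_real: assumes "0 < Mn q eps" shows "real (Mn q eps) = 1 / q - ee eps - 1"
proof -
  obtain zi where z: "1 / q - ee eps = real_of_int zi" "wf_tstar q eps = zi" by (rule zi)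
  with assms show ?thesis unfolding Mn_def by simp
qed

lemma ee_nonneg: "0 \<le> ee eps" unfolding ee_def using e0 e1 by simp

lemma one_ee: "1 + ee eps = 1 / (1 - eps)" unfolding ee_def using e1 by (simp add: field_simps)

lemma eps_ee: "eps * (1 + ee eps) = ee eps" unfolding ee_def using e1 by (simp add: field_simps)

lemma Mq: assumes "0 < Mn q eps" shows "real (Mn q eps) * q = 1 - q * ee eps - q"
  using M_real[OF assms] q0 by (simp add: field_simps)

lemma pos_tq: assumes "t \<le> Mn q eps" "0 < Mn q eps" shows "q * (1 + ee eps) \<le> 1 - real t * q"
proof -
  have "real t * q \<le> real (Mn q eps) * q" using assms q0 by (simp add: mult_right_mono)
  then show ?thesis using Mq[OF assms(2)] by (simp add: algebra_simps)
qed

lemma pos_tq': assumes "t \<le> Mn q eps" "0 < Mn q eps" shows "0 < 1 - real t * q"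
  using pos_tq[OF assms] q0 ee_nonneg by (smt (verit) mult_pos_pos)

lemma wfp: "wf_p q eps t = (if t < Mn q eps then q / (1 - eps) * inverse (1 - real t * q) else 1)"
  unfolding wf_p_def Mn_def by auto

lemma wfp_bounds: "0 \<le> wf_p q eps t \<and> wf_p q eps t \<le> 1"
proof (cases "t < Mn q eps")
  case True
  have M0: "0 < Mn q eps" using True by simp
  have tp: "0 < 1 - real t * q" using pos_tq'[of t] True by simp
  have "real t * q \<le> (real (Mn q eps) - 1) * q" using True q0
    by (intro mult_right_mono) auto
  then have "q * (1 + ee eps) \<le> 1 - real t * q" using Mq[OF M0] q0 ee_nonneg
    by (simp add: algebra_simps)
  then have "q / (1 - eps) \<le> 1 - real t * q" using one_ee by simp
  then show ?thesis using True tp q0 e1 by (simp add: wfp field_simps)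
next
  case False
  then show ?thesis by (simp add: wfp)
qed

lemma AA_step: "AA q eps t = (1 - real t * q) + AA q eps (Suc t)"
proof -
  have "\<And>M c. (M - real (Suc t)) - q * (M * (M - 1) - real (Suc t) * (real (Suc t) - 1)) / 2 + c + (1 - real t * q)
   = (M - real t) - q * (M * (M - 1) - real t * (real t - 1)) / 2 + c"
    by (simp add: of_nat_Suc algebra_simps diff_divide_distrib add_divide_distrib)
  from this[of "real (Mn q eps)" "(1 - real (Mn q eps) * q) * (1 + ee eps)"]
  show ?thesis unfolding AA_def by linarith
qed

lemma AA_M: "AA q eps (Mn q eps) = (1 - real (Mn q eps) * q) * (1 + ee eps)"
  unfolding AA_def by simp

lemma AA_nonneg: assumes "t \<le> Mn q eps" "0 < Mn q eps" shows "0 \<le> AA q eps t"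
proof -
  define M where "M = real (Mn q eps)"
  have f: "M * (M - 1) - real t * (real t - 1) = (M - real t) * (M + real t - 1)" by (simp add: algebra_simps)
  have tM: "real t \<le> M" using assms M_def by simp
  have "q * (M + real t - 1) \<le> q * (2 * M)" using tM q0 by (intro mult_left_mono) auto
  moreover have "M * q \<le> 1" using Mq[OF assms(2)] M_def q0 ee_nonneg
    by (smt (verit) mult_nonneg_nonneg)
  ultimately have h: "q * (M + real t - 1) / 2 \<le> 1" by (simp add: algebra_simps)
  have "AA q eps t = (M - real t) * (1 - q * (M + real t - 1) / 2) + (1 - M * q) * (1 + ee eps)"
    unfolding AA_def M_def[symmetric] using f by (simp add: algebra_simps)
  moreover have "0 \<le> (M - real t) * (1 - q * (M + real t - 1) / 2)" using h tM by simp
  moreover have "0 \<le> (1 - M * q) * (1 + ee eps)" using \<open>M * q \<le> 1\<close> ee_nonneg by simp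
  ultimately show ?thesis by linarith
qed

lemma VV_ge1: "1 \<le> VV q eps t"
proof (cases "t < Mn q eps")
  case True
  have tp: "0 < 1 - real t * q" using pos_tq'[of t] True by simp
  have "0 \<le> AA q eps (Suc t)" using AA_nonneg[of "Suc t"] True by simp
  then have "1 - real t * q \<le> AA q eps t" using AA_step[of t] by simp
  then show ?thesis using True tp by (simp add: VV_def)
next
  case False
  then show ?thesis using ee_nonneg by (simp add: VV_def)
qed

lemma VV_rec: "1 + (1 - wf_p q eps t * (1 - eps)) * VV q eps (Suc t) \<le> VV q eps t"
proof (cases "t < Mn q eps")
  case True
  have M0: "0 < Mn q eps" using True by simp
  have tp: "0 < 1 - real t * q" using pos_tq'[of t] True by simp
  have t1p: "0 < 1 - real (Suc t) * q" using pos_tq'[of "Suc t"] True by simp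
  have v1: "(1 - real (Suc t) * q) * VV q eps (Suc t) = AA q eps (Suc t)"
  proof (cases "Suc t < Mn q eps")
    case True then show ?thesis using t1p by (simp add: VV_def)
  next
    case False
    then have "Suc t = Mn q eps" using \<open>t < Mn q eps\<close> by simp
    then show ?thesis using AA_M by (simp add: VV_def)
  qed
  have "wf_p q eps t = q / (1 - eps) / (1 - real t * q)"
    using True by (simp add: wfp divide_inverse)
  then have p: "wf_p q eps t * (1 - eps) = q / (1 - real t * q)"
    using e1 by simp
  have "1 - q / (1 - real t * q) = (1 - real (Suc t) * q) / (1 - real t * q)"
    using tp by (simp add: field_simps)
  then have r: "1 - wf_p q eps t * (1 - eps) = (1 - real (Suc t) * q) / (1 - real t * q)"
    using p by simp
  have "(1 - wf_p q eps t * (1 - eps)) * VV q eps (Suc t) = AA q eps (Suc t) / (1 - real t * q)"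
    by (simp only: r times_divide_eq_left v1)
  then have "1 + (1 - wf_p q eps t * (1 - eps)) * VV q eps (Suc t) = 1 + AA q eps (Suc t) / (1 - real t * q)"
    by simp
  also have "\<dots> = AA q eps t / (1 - real t * q)" using tp AA_step[of t] by (simp add: field_simps)
  finally show ?thesis using True by (simp add: VV_def)
next
  case False
  then show ?thesis using eps_ee by (simp add: VV_def wfp algebra_simps)
qed

lemma VV0: "VV q eps 0 \<le> 1 / (2 * q) + 1 / 2 + q * eps / (2 * (1 - eps)^2)"
proof -
  obtain zi where z: "1 / q - ee eps = real_of_int zi" "wf_tstar q eps = zi" by (rule zi)
  have b: "q * eps / (2 * (1 - eps)^2) = q * ee eps * (1 + ee eps) / 2"
    using e1 unfolding ee_def by (simp add: field_simps power2_eq_square)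
  define e where "e = ee eps"
  have e_ge: "0 \<le> e" using ee_nonneg e_def by simp
  show ?thesis
  proof (cases "zi \<ge> 1")
    case True
    have M: "real (Mn q eps) = 1 / q - e - 1" using True z unfolding Mn_def e_def by simp
    have "VV q eps 0 = AA q eps 0"
      by (cases "0 < Mn q eps") (auto simp: VV_def AA_def)
    also have "\<dots> = 1 / (2 * q) + 1 / 2 + q * e * (1 + e) / 2"
      unfolding AA_def M e_def[symmetric] using q0 by (simp add: field_simps power2_eq_square)
    finally show ?thesis using b e_def by simp
  next
    case False
    then have "Mn q eps = 0" using z unfolding Mn_def by simp
    then have V: "VV q eps 0 = 1 + e" by (simp add: VV_def e_def)
    have "1 / q - e \<le> 0" using False z e_def by simp
    then have u: "1 \<le> q * e" using q0 by (simp add: field_simps)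
    define u where "u = q * e"
    have "0 \<le> (1 - u) * (1 - u - q)" using u u_def q0 by (intro mult_nonpos_nonpos) auto
    have h1: "(1 / (2 * q)) * (2 * q) = 1" using q0 by simp
    have "(1 / (2 * q) + 1 / 2 + q * e * (1 + e) / 2 - (1 + e)) * (2 * q)
        = (1 / (2 * q)) * (2 * q) + q + q * q * e * (1 + e) - 2 * q * (1 + e)"
      by (simp add: algebra_simps)
    also have "\<dots> = (1 - u) * (1 - u - q)" unfolding h1 u_def by (simp add: algebra_simps)
    finally have "(1 / (2 * q) + 1 / 2 + q * e * (1 + e) / 2 - (1 + e)) * (2 * q) = (1 - u) * (1 - u - q)" .
    then have "0 \<le> (1 / (2 * q) + 1 / 2 + q * e * (1 + e) / 2 - (1 + e)) * (2 * q)"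
      using \<open>0 \<le> (1 - u) * (1 - u - q)\<close> by simp
    then have "0 \<le> 1 / (2 * q) + 1 / 2 + q * e * (1 + e) / 2 - (1 + e)"
      using q0 by (simp add: zero_le_mult_iff)
    moreover have b': "q * eps / (2 * (1 - eps)^2) = q * e * (1 + e) / 2" using b e_def by simp
    ultimately show ?thesis using V by linarith
  qed
qed

lemma sr_bound: "C = t + k + 1 \<Longrightarrow>
  measure_pmf.expectation (sr q eps k t None) (\<lambda>ob. real (case ob of Some b \<Rightarrow> b | None \<Rightarrow> C))
    \<le> real t + VV q eps t"
proof (induction k arbitrary: t)
  case 0
  then show ?case using VV_ge1[of t] by (simp add: exp_return)
next
  case (Suc k)
  define g where "g = (\<lambda>ob. real (case ob of Some b \<Rightarrow> b | None \<Rightarrow> C))"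
  define p where "p = wf_p q eps t"
  define W where "W = measure_pmf.expectation (sr q eps k (Suc t) None) g"
  have p01: "0 \<le> p" "p \<le> 1" using wfp_bounds p_def by auto
  have IH: "W \<le> real (Suc t) + VV q eps (Suc t)" using Suc.IH[of "Suc t"] Suc.prems W_def g_def by simp
  have E: "measure_pmf.expectation (sr q eps (Suc k) t None) g
     = p * ((1 - eps) * real (Suc t) + eps * W) + (1 - p) * W"
    using p01 e0 e1
    by (simp add: p_def[symmetric] exp_bern sr_finite fin_bool exp_return sr_Some W_def g_def)
  have c: "0 \<le> 1 - p * (1 - eps)" using p01 e0 e1 by (simp add: mult_le_one)
  have "measure_pmf.expectation (sr q eps (Suc k) t None) g = p * (1 - eps) * real (Suc t) + (1 - p * (1 - eps)) * W"
    unfolding E by (simp add: algebra_simps)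
  also have "\<dots> \<le> p * (1 - eps) * real (Suc t) + (1 - p * (1 - eps)) * (real (Suc t) + VV q eps (Suc t))"
    using c IH by (intro add_left_mono mult_left_mono) auto
  also have "\<dots> = real t + (1 + (1 - p * (1 - eps)) * VV q eps (Suc t))" by (simp add: algebra_simps)
  also have "\<dots> \<le> real t + VV q eps t" using VV_rec[of t] p_def by simp
  finally show ?case unfolding g_def .
qed

end

definition inv2 :: "nat \<Rightarrow> wf_state \<Rightarrow> bool" where
  "inv2 t s = (case s of (x, L, Th, Tih) \<Rightarrow> (\<forall>b. Tih = Some b \<longrightarrow> b \<le> t) \<and>
     (case Th of None \<Rightarrow> Tih = None | Some a \<Rightarrow> a \<le> t \<and> (\<forall>b. Tih = Some b \<longrightarrow> a \<le> b)))"

lemma step_inv2: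
  assumes "inv2 t s" "s' \<in> set_pmf (wf_step N q eps d t s)" shows "inv2 (Suc t) s'"
proof -
  obtain x L Th Tih where s: "s = (x,L,Th,Tih)" by (cases s)
  from assms(2) obtain att a bb x' where
    A: "att \<in> set_pmf (if x \<in> N d \<and> Tih = None then bernoulli_pmf (wf_p q eps L) else return_pmf False)"
    and B: "a \<in> set_pmf (if att then return_pmf d else pmf_of_set (N x))"
    and C: "x' \<in> set_pmf (if bb then return_pmf a else pmf_of_set (N x))"
    and D: "s' = (x', L + (if x' \<in> N d then 1 else 0),
     (if Th = None \<and> x' = d then Some (Suc t) else Th), (if Tih = None \<and> att \<and> bb then Some (Suc t) else Tih))"
    unfolding wf_step_def s by (simp only: prod.case set_bind_pmf UN_iff set_return_pmf singleton_iff) blast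
  have A': "att \<longrightarrow> Tih = None" using A by (cases "x \<in> N d \<and> Tih = None") auto
  have B': "att \<longrightarrow> a = d" using B by (cases att) auto
  have C': "bb \<longrightarrow> x' = a" using C by (cases bb) auto
  have h: "att \<and> bb \<longrightarrow> x' = d" "att \<longrightarrow> Tih = None" "s' = (x', L + (if x' \<in> N d then 1 else 0),
     (if Th = None \<and> x' = d then Some (Suc t) else Th), (if Tih = None \<and> att \<and> bb then Some (Suc t) else Tih))"
    using A' B' C' D by auto
  show ?thesis
  proof (cases Th)
    case None
    then have "Tih = None" using assms(1) s by (simp add: inv2_def)
    then show ?thesis using h None by (auto simp: inv2_def)
  next
    case (Some a0)
    then have i: "a0 \<le> t" "\<And>b. Tih = Some b \<Longrightarrow> a0 \<le> b \<and> b \<le> t" using assms(1) s by (auto simp: inv2_def)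
    show ?thesis
    proof (cases Tih)
      case None then show ?thesis using h Some i by (auto simp: inv2_def)
    next
      case (Some b0) then show ?thesis using h \<open>Th = Some a0\<close> i by (auto simp: inv2_def)
    qed
  qed
qed

lemma run_inv2: "inv2 t s \<Longrightarrow> s' \<in> set_pmf (wf_run N q eps d k t s) \<Longrightarrow> inv2 (t + k) s'"
proof (induction k arbitrary: t s)
  case 0 then show ?case by simp
next
  case (Suc k)
  then obtain s1 where "s1 \<in> set_pmf (wf_step N q eps d t s)" "s' \<in> set_pmf (wf_run N q eps d k (Suc t) s1)" by auto
  then show ?case using Suc.IH[of "Suc t" s1] step_inv2[OF Suc.prems(1)] by simp
qed


lemma step_set:
  assumes "d < n" "x < n" "s' \<in> set_pmf (wf_step (complete_nbhd n) q eps d t (x,L,Th,Tih))"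
  shows "fst s' < n \<and> fst (snd s') = Suc L"
proof -
  have ne: "{..<n} \<noteq> {}" using assms by auto
  show ?thesis using assms(3) assms(1,2) ne
    unfolding wf_step_def complete_nbhd_def
    by (auto simp: set_pmf_of_set split: if_splits)
qed

lemma step_proj:
  assumes "d < n" "x < n"
  shows "bind_pmf (wf_step (complete_nbhd n) q eps d L (x,L,Th,Tih)) (\<lambda>s'. sr q eps k (Suc L) (snd (snd (snd s'))))
       = sr q eps (Suc k) L Tih"
  using assms unfolding wf_step_def complete_nbhd_def
  by (simp add: bind_assoc_pmf bind_return_pmf)

lemma run_proj:
  assumes "d < n" "x < n"
  shows "map_pmf (\<lambda>s. snd (snd (snd s))) (wf_run (complete_nbhd n) q eps d k L (x,L,Th,Tih)) = sr q eps k L Tih"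
  using assms(2)
proof (induction k arbitrary: x L Th Tih)
  case 0
  then show ?case by simp
next
  case (Suc k)
  have "map_pmf (\<lambda>s. snd (snd (snd s))) (wf_run (complete_nbhd n) q eps d (Suc k) L (x,L,Th,Tih))
     = bind_pmf (wf_step (complete_nbhd n) q eps d L (x,L,Th,Tih)) (\<lambda>s'. sr q eps k (Suc L) (snd (snd (snd s'))))"
    unfolding wf_run.simps map_bind_pmf
  proof (rule bind_pmf_cong[OF refl])
    fix s' assume "s' \<in> set_pmf (wf_step (complete_nbhd n) q eps d L (x,L,Th,Tih))"
    from step_set[OF assms(1) Suc.prems this] obtain x' Th' Tih' where
      "s' = (x', Suc L, Th', Tih')" "x' < n" by (cases s') auto
    then show "map_pmf (\<lambda>s. snd (snd (snd s))) (wf_run (complete_nbhd n) q eps d k (Suc L) s') = sr q eps k (Suc L) (snd (snd (snd s')))"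
      using Suc.IH by simp
  qed
  also have "\<dots> = sr q eps (Suc k) L Tih" by (rule step_proj[OF assms(1) Suc.prems])
  finally show ?case .
qed

theorem lemma2:
  fixes n x0 K :: nat and eps q :: real
  assumes "n \<ge> 1" and "x0 < n"
    and "0 \<le> eps" and "eps < 1"
    and "0 < q" and "q \<le> 1"
    and "1 / q - eps / (1 - eps) \<in> \<int>"
  shows "measure_pmf.expectation (wf_times (complete_nbhd n) n q eps x0 K) (\<lambda>p. real (fst p))
           \<le> measure_pmf.expectation (wf_times (complete_nbhd n) n q eps x0 K) (\<lambda>p. real (snd p))
       \<and> measure_pmf.expectation (wf_times (complete_nbhd n) n q eps x0 K) (\<lambda>p. real (snd p))
           \<le> 1 / (2 * q) + 1 / 2 + q * eps / (2 * (1 - eps)^2)"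
proof -
  define W where "W = wf_times (complete_nbhd n) n q eps x0 K"
  have "0 \<in> {..<n}" using assms(1) by simp
  then have ne: "{..<n} \<noteq> {}" by blast
  have dset: "set_pmf (pmf_of_set {..<n}) = {..<n}" using ne by (simp add: set_pmf_of_set)
  have inv0: "inv2 0 (x0, 0, None, None)" by (simp add: inv2_def)
  have sup: "fst p \<le> snd p \<and> snd p \<le> Suc K" if "p \<in> set_pmf W" for p
  proof -
    from that obtain d s where ds: "d < n" "s \<in> set_pmf (wf_run (complete_nbhd n) q eps d K 0 (x0, 0, None, None))"
      "p = (\<lambda>(x, L, Th, Tih). (case Th of Some t \<Rightarrow> t | None \<Rightarrow> Suc K, case Tih of Some t \<Rightarrow> t | None \<Rightarrow> Suc K)) s"
      unfolding W_def wf_times_def using dset by auto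
    have iv: "inv2 K s" using run_inv2[OF inv0 ds(2)] by simp
    obtain x L Th Tih where s: "s = (x, L, Th, Tih)" by (cases s)
    show ?thesis using iv ds(3) unfolding s inv2_def by (auto split: option.splits)
  qed
  have fin: "finite (set_pmf W)"
    by (rule finite_subset[of _ "{..Suc K} \<times> {..Suc K}"]) (use sup in force)+
  have part1: "measure_pmf.expectation W (\<lambda>p. real (fst p)) \<le> measure_pmf.expectation W (\<lambda>p. real (snd p))"
    by (intro integral_mono_AE integrable_measure_pmf_finite[OF fin])
       (use sup in \<open>auto simp: AE_measure_pmf_iff\<close>)
  define G where "G = (\<lambda>ob. case ob of Some t \<Rightarrow> t | None \<Rightarrow> Suc K)"
  have msnd: "map_pmf snd W = map_pmf G (sr q eps K 0 None)"
  proof -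
    have "map_pmf snd W = bind_pmf (pmf_of_set {..<n}) (\<lambda>d. map_pmf G (sr q eps K 0 None))"
      unfolding W_def wf_times_def map_bind_pmf
    proof (rule bind_pmf_cong[OF refl])
      fix d assume "d \<in> set_pmf (pmf_of_set {..<n})"
      then have d: "d < n" using dset by simp
      have "map_pmf snd (map_pmf (\<lambda>(x, L, Th, Tih). (case Th of Some t \<Rightarrow> t | None \<Rightarrow> Suc K, case Tih of Some t \<Rightarrow> t | None \<Rightarrow> Suc K))
            (wf_run (complete_nbhd n) q eps d K 0 (x0, 0, None, None)))
          = map_pmf G (map_pmf (\<lambda>s. snd (snd (snd s))) (wf_run (complete_nbhd n) q eps d K 0 (x0, 0, None, None)))"
        unfolding map_pmf_comp G_def by (intro map_pmf_cong) auto
      also have "\<dots> = map_pmf G (sr q eps K 0 None)"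
        using run_proj[OF d assms(2), of q eps K 0 None None] by simp
      finally show "map_pmf snd (map_pmf (\<lambda>(x, L, Th, Tih). (case Th of Some t \<Rightarrow> t | None \<Rightarrow> Suc K, case Tih of Some t \<Rightarrow> t | None \<Rightarrow> Suc K))
            (wf_run (complete_nbhd n) q eps d K 0 (x0, 0, None, None))) = map_pmf G (sr q eps K 0 None)" .
    qed
    then show ?thesis by simp
  qed
  have "measure_pmf.expectation W (\<lambda>p. real (snd p)) = measure_pmf.expectation (map_pmf snd W) real"
    by simp
  also have "\<dots> = measure_pmf.expectation (sr q eps K 0 None) (\<lambda>ob. real (case ob of Some b \<Rightarrow> b | None \<Rightarrow> Suc K))"
    unfolding msnd G_def by simp
  also have "\<dots> \<le> real 0 + VV q eps 0"
    using sr_bound[OF assms(3,4,5,6,7), of "Suc K" 0 K] by simp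
  also have "\<dots> \<le> 1 / (2 * q) + 1 / 2 + q * eps / (2 * (1 - eps)^2)"
    using VV0[OF assms(3,4,5,6,7)] by simp
  finally show ?thesis using part1 unfolding W_def by simp
qed

end
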